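(* Let $W=(W_1,\dots,W_d)$ be a $d$-dimensional standard Wiener process, $t>0$ and $c\ge0$. Then $$E\Big[\exp\Big(c\sum_{i=1}^d\int_0^t\Big|\int_0^s\frac{1}{t-r}\,dW_i(r)\Big|\,ds\Big)\Big]\le\Big(e^{2c^2t}+2c\sqrt{2\pi t}\,e^{4c^2t}\Big)^{d/2}<\infty.$$ *)

theory Defs
  imports "HOL-Probability.Probability"
begin

definition wiener_process :: "'a measure \<Rightarrow> nat \<Rightarrow> (nat \<Rightarrow> real \<Rightarrow> 'a \<Rightarrow> real) \<Rightarrow> bool" where
  "wiener_process M d W \<longleftrightarrow>
     prob_space M \<and>
     (\<forall>i<d. \<forall>t\<ge>0. W i t \<in> borel_measurable M) \<and>
     (\<forall>i<d. \<forall>\<omega>\<in>space M. W i 0 \<omega> = 0 \<and> continuous_on {0..} (\<lambda>t. W i t \<omega>)) \<and>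
     (\<forall>(n::nat) (ts::nat \<Rightarrow> real). 0 \<le> ts 0 \<longrightarrow> (\<forall>k<n. ts k < ts (Suc k)) \<longrightarrow>
        prob_space.indep_vars M (\<lambda>_. borel)
          (\<lambda>(i, k) \<omega>. W i (ts (Suc k)) \<omega> - W i (ts k) \<omega>) ({..<d} \<times> {..<n}) \<and>
        (\<forall>i<d. \<forall>k<n. distributed M lborel (\<lambda>\<omega>. W i (ts (Suc k)) \<omega> - W i (ts k) \<omega>)
            (\<lambda>x. ennreal (normal_density 0 (sqrt (ts (Suc k) - ts k)) x))))"

text \<open>Wiener (Paley-Wiener-Zygmund) integral of a deterministic C^1 integrand f against a
real path B, defined pathwise by integration by parts:
  int_0^s f(r) dB(r) = f(s) B(s) - int_0^s f'(r) B(r) dr   (B(0) = 0).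
For a standard Wiener process it agrees a.s. with the Ito integral.\<close>
definition wiener_integral :: "(real \<Rightarrow> real) \<Rightarrow> (real \<Rightarrow> 'a \<Rightarrow> real) \<Rightarrow> real \<Rightarrow> 'a \<Rightarrow> real" where
  "wiener_integral f B s \<omega> = f s * B s \<omega> - integral {0..s} (\<lambda>r. deriv f r * B r \<omega>)"

end

theory Submission
  imports Defs
begin
lemma normal_density_le_max:
  assumes "\<sigma> > 0" shows "normal_density m \<sigma> x \<le> 1 / sqrt (2 * pi * \<sigma>\<^sup>2)"
proof -
  have "exp (-(x - m)\<^sup>2/ (2 * \<sigma>\<^sup>2)) \<le> 1" by simp
  then show ?thesis unfolding normal_density_def using assms
    by (simp add: divide_right_mono)
qed

lemma nn_normal_total:
  assumes "\<sigma> > 0" shows "(\<integral>\<^sup>+x. ennreal (normal_density m \<sigma> x) \<partial>lborel) = 1"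
  using assms by (subst nn_integral_eq_integral) (auto simp: normal_density_nonneg)

lemma gauss_abs_exp:
  fixes \<sigma> l :: real
  assumes s: "\<sigma> > 0" and l: "l \<ge> 0"
  shows "(\<integral>\<^sup>+x. ennreal (normal_density 0 \<sigma> x * exp (l * \<bar>x\<bar>)) \<partial>lborel)
          \<le> ennreal (exp (l\<^sup>2 * \<sigma>\<^sup>2 / 2) * (1 + l * \<sigma> * sqrt (2 / pi)))"
proof -
  define E where "E = exp (l\<^sup>2 * \<sigma>\<^sup>2 / 2)"
  define m where "m = l * \<sigma>\<^sup>2"
  define p0 where "p0 = 1 / sqrt (2 * pi * \<sigma>\<^sup>2)"
  have m0: "m \<ge> 0" using l by (simp add: m_def)
  have pos1: "normal_density 0 \<sigma> x * exp (l * x) = E * normal_density m \<sigma> x" for x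
  proof -
    have "-(x - 0)\<^sup>2/ (2 * \<sigma>\<^sup>2) + l * x = l\<^sup>2 * \<sigma>\<^sup>2 / 2 + (-(x - m)\<^sup>2/ (2 * \<sigma>\<^sup>2))"
      using s by (simp add: m_def power2_eq_square field_simps)
    then have "exp (-(x - 0)\<^sup>2/ (2 * \<sigma>\<^sup>2)) * exp (l * x) = E * exp (-(x - m)\<^sup>2/ (2 * \<sigma>\<^sup>2))"
      by (simp add: E_def mult_exp_exp)
    then show ?thesis unfolding normal_density_def by (simp add: algebra_simps)
  qed
  have pos2: "normal_density 0 \<sigma> x * exp (- l * x) = E * normal_density (-m) \<sigma> x" for x
  proof -
    have "-(x - 0)\<^sup>2/ (2 * \<sigma>\<^sup>2) + (- l * x) = l\<^sup>2 * \<sigma>\<^sup>2 / 2 + (-(x - (-m))\<^sup>2/ (2 * \<sigma>\<^sup>2))"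
      using s by (simp add: m_def power2_eq_square field_simps)
    then have "exp (-(x - 0)\<^sup>2/ (2 * \<sigma>\<^sup>2)) * exp (- l * x) = E * exp (-(x - (-m))\<^sup>2/ (2 * \<sigma>\<^sup>2))"
      by (simp add: E_def mult_exp_exp)
    then show ?thesis unfolding normal_density_def by (simp add: algebra_simps)
  qed
  have pw: "ennreal (normal_density 0 \<sigma> x * exp (l * \<bar>x\<bar>)) \<le>
      ennreal E * (ennreal (normal_density m \<sigma> x) * indicator {m..} x
        + ennreal (normal_density (-m) \<sigma> x) * indicator {..<-m} x
        + ennreal p0 * indicator {-m..<m} x)" for x
  proof -
    have b1: "normal_density m \<sigma> x \<le> p0" "normal_density (-m) \<sigma> x \<le> p0"
      using normal_density_le_max[OF s] by (auto simp: p0_def)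
    have E0: "E \<ge> 0" by (simp add: E_def)
    have p00: "p0 \<ge> 0" by (simp add: p0_def)
    have h2: "normal_density m \<sigma> x \<le> p0" "normal_density (-m) \<sigma> x \<le> p0" using b1 by linarith+
    show ?thesis
    proof (cases "x \<ge> 0")
      case True
      then have "normal_density 0 \<sigma> x * exp (l * \<bar>x\<bar>) = E * normal_density m \<sigma> x" using pos1 by simp
      moreover have "E * normal_density m \<sigma> x \<le> E * (normal_density m \<sigma> x * indicator {m..} x
        + normal_density (-m) \<sigma> x * indicator {..<-m} x + p0 * indicator {-m..<m} x)"
        using True b1 E0 m0 h2 normal_density_nonneg[of m \<sigma> x] normal_density_nonneg[of "-m" \<sigma> x]
        by (intro mult_left_mono, cases "x < m", simp_all add: indicator_def)
      ultimately show ?thesis using E0 b1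
        by (simp add: ennreal_mult'[symmetric] ennreal_plus[symmetric] normal_density_nonneg p0_def
            del: ennreal_plus flip: ennreal_indicator)
    next
      case False
      then have "normal_density 0 \<sigma> x * exp (l * \<bar>x\<bar>) = E * normal_density (-m) \<sigma> x" using pos2 by simp
      moreover have "E * normal_density (-m) \<sigma> x \<le> E * (normal_density m \<sigma> x * indicator {m..} x
        + normal_density (-m) \<sigma> x * indicator {..<-m} x + p0 * indicator {-m..<m} x)"
        using False b1 E0 m0 h2 normal_density_nonneg[of m \<sigma> x] normal_density_nonneg[of "-m" \<sigma> x]
        by (intro mult_left_mono, cases "x < m", simp_all add: indicator_def)
      ultimately show ?thesis using E0 b1
        by (simp add: ennreal_mult'[symmetric] ennreal_plus[symmetric] normal_density_nonneg p0_def
            del: ennreal_plus flip: ennreal_indicator)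
    qed
  qed
  have i1: "(\<integral>\<^sup>+x. ennreal (normal_density m \<sigma> x) * indicator {m..} x \<partial>lborel)
      = (\<integral>\<^sup>+x. ennreal (normal_density 0 \<sigma> x) * indicator {0..} x \<partial>lborel)"
    by (subst nn_integral_real_affine[where c=1 and t=m]) (auto simp: normal_density_def indicator_def)
  have i2: "(\<integral>\<^sup>+x. ennreal (normal_density (-m) \<sigma> x) * indicator {..<-m} x \<partial>lborel)
      = (\<integral>\<^sup>+x. ennreal (normal_density 0 \<sigma> x) * indicator {..<0} x \<partial>lborel)"
    by (subst nn_integral_real_affine[where c=1 and t="-m"]) (auto simp: normal_density_def indicator_def)
  have i3: "(\<integral>\<^sup>+x. ennreal (normal_density 0 \<sigma> x) * indicator {0..} x \<partial>lborel)
      + (\<integral>\<^sup>+x. ennreal (normal_density 0 \<sigma> x) * indicator {..<0} x \<partial>lborel) = 1"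
  proof -
    have "(\<integral>\<^sup>+x. ennreal (normal_density 0 \<sigma> x) * indicator {0..} x \<partial>lborel)
      + (\<integral>\<^sup>+x. ennreal (normal_density 0 \<sigma> x) * indicator {..<0} x \<partial>lborel)
      = (\<integral>\<^sup>+x. ennreal (normal_density 0 \<sigma> x) * indicator {0..} x
            + ennreal (normal_density 0 \<sigma> x) * indicator {..<0} x \<partial>lborel)"
      by (rule nn_integral_add[symmetric]) auto
    also have "\<dots> = (\<integral>\<^sup>+x. ennreal (normal_density 0 \<sigma> x) \<partial>lborel)"
      by (rule nn_integral_cong) (auto simp: indicator_def)
    finally show ?thesis using nn_normal_total[OF s] by simp
  qed
  have i4: "(\<integral>\<^sup>+x. ennreal p0 * indicator {-m..<m} x \<partial>lborel) = ennreal (p0 * (2 * m))"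
    using m0 by (subst nn_integral_cmult_indicator) (auto simp: p0_def ennreal_mult[symmetric])
  have "(\<integral>\<^sup>+x. ennreal (normal_density 0 \<sigma> x * exp (l * \<bar>x\<bar>)) \<partial>lborel)
     \<le> (\<integral>\<^sup>+x. ennreal E * (ennreal (normal_density m \<sigma> x) * indicator {m..} x
        + ennreal (normal_density (-m) \<sigma> x) * indicator {..<-m} x
        + ennreal p0 * indicator {-m..<m} x) \<partial>lborel)"
    by (rule nn_integral_mono) (rule pw)
  also have "\<dots> = ennreal E * ((\<integral>\<^sup>+x. ennreal (normal_density m \<sigma> x) * indicator {m..} x \<partial>lborel)
        + (\<integral>\<^sup>+x. ennreal (normal_density (-m) \<sigma> x) * indicator {..<-m} x \<partial>lborel)
        + (\<integral>\<^sup>+x. ennreal p0 * indicator {-m..<m} x \<partial>lborel))"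
    by (simp add: nn_integral_cmult nn_integral_add)
  also have "\<dots> = ennreal E * (1 + ennreal (p0 * (2 * m)))"
    using i1 i2 i3 i4 by simp
  also have "\<dots> = ennreal (E * (1 + 2 * p0 * m))"
  proof -
    have q: "0 \<le> 2 * p0 * m" using m0 by (simp add: p0_def)
    have e: "1 + ennreal (p0 * (2 * m)) = ennreal (1 + 2 * p0 * m)"
      using q by (simp add: ennreal_plus[symmetric] del: ennreal_plus) (simp add: algebra_simps)
    show ?thesis unfolding e by (rule ennreal_mult[symmetric]) (auto simp: E_def q)
  qed
  also have "E * (1 + 2 * p0 * m) = exp (l\<^sup>2 * \<sigma>\<^sup>2 / 2) * (1 + l * \<sigma> * sqrt (2 / pi))"
  proof -
    have "2 * p0 * m = l * \<sigma> * sqrt (2 / pi)"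
    proof -
      have "sqrt (2 * pi * \<sigma>\<^sup>2) = sqrt (2*pi) * \<sigma>" using s by (simp add: real_sqrt_mult)
      moreover have "sqrt (2 / pi) = 2 / sqrt (2 * pi)"
        by (simp add: real_sqrt_divide real_sqrt_mult field_simps)
      ultimately show ?thesis using s by (simp add: p0_def m_def power2_eq_square field_simps)
    qed
    then show ?thesis by (simp add: E_def)
  qed
  finally show ?thesis .
qed

lemma holder_exp:
  fixes A :: "'j \<Rightarrow> 'a \<Rightarrow> real" and \<theta> :: "'j \<Rightarrow> real"
  assumes J: "finite J" "J \<noteq> {}" and th: "\<And>j. j \<in> J \<Longrightarrow> \<theta> j > 0" "(\<Sum>j\<in>J. \<theta> j) = 1"
    and meas: "\<And>j. j \<in> J \<Longrightarrow> A j \<in> borel_measurable M"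
    and bnd: "\<And>j. j \<in> J \<Longrightarrow> (\<integral>\<^sup>+\<omega>. ennreal (exp (A j \<omega> / \<theta> j)) \<partial>M) \<le> ennreal B"
    and B: "B \<ge> 0"
  shows "(\<integral>\<^sup>+\<omega>. ennreal (exp (\<Sum>j\<in>J. A j \<omega>)) \<partial>M) \<le> ennreal B"
proof -
  have pw: "exp (\<Sum>j\<in>J. A j \<omega>) \<le> (\<Sum>j\<in>J. \<theta> j * exp (A j \<omega> / \<theta> j))" for \<omega>
  proof -
    have "(\<Sum>j\<in>J. A j \<omega>) = (\<Sum>j\<in>J. \<theta> j *\<^sub>R (A j \<omega> / \<theta> j))"
      using th by (intro sum.cong) (auto dest: th(1))
    then show ?thesis
      using convex_on_sum[OF J exp_convex th(2), of "\<lambda>j. A j \<omega> / \<theta> j"] th(1)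
      by (simp add: less_imp_le)
  qed
  have "(\<integral>\<^sup>+\<omega>. ennreal (exp (\<Sum>j\<in>J. A j \<omega>)) \<partial>M)
      \<le> (\<integral>\<^sup>+\<omega>. (\<Sum>j\<in>J. ennreal (\<theta> j) * ennreal (exp (A j \<omega> / \<theta> j))) \<partial>M)"
  proof (rule nn_integral_mono)
    fix \<omega>
    have "ennreal (exp (\<Sum>j\<in>J. A j \<omega>)) \<le> ennreal (\<Sum>j\<in>J. \<theta> j * exp (A j \<omega> / \<theta> j))"
      using pw by (rule ennreal_leI)
    also have "\<dots> = (\<Sum>j\<in>J. ennreal (\<theta> j) * ennreal (exp (A j \<omega> / \<theta> j)))"
      using th by (subst sum_ennreal[symmetric]) (auto intro!: sum.cong simp: ennreal_mult less_imp_le dest: th(1))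
    finally show "ennreal (exp (\<Sum>j\<in>J. A j \<omega>)) \<le> (\<Sum>j\<in>J. ennreal (\<theta> j) * ennreal (exp (A j \<omega> / \<theta> j)))" .
  qed
  also have "\<dots> = (\<Sum>j\<in>J. ennreal (\<theta> j) * (\<integral>\<^sup>+\<omega>. ennreal (exp (A j \<omega> / \<theta> j)) \<partial>M))"
    using meas by (subst nn_integral_sum) (auto intro!: sum.cong nn_integral_cmult)
  also have "\<dots> \<le> (\<Sum>j\<in>J. ennreal (\<theta> j) * ennreal B)"
    by (intro sum_mono mult_left_mono bnd) auto
  also have "\<dots> = ennreal (\<Sum>j\<in>J. \<theta> j * B)"
    using th B by (subst sum_ennreal[symmetric]) (auto simp: ennreal_mult[symmetric] less_imp_le dest: th(1))
  also have "(\<Sum>j\<in>J. \<theta> j * B) = B" using th by (simp add: sum_distrib_right[symmetric])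
  finally show ?thesis .
qed

lemma final_ineq:
  fixes x :: real assumes x: "x \<ge> 0"
  shows "(exp ((pi/2*x)\<^sup>2 / 2) * (1 + (pi/2*x) * sqrt (2 / pi)))\<^sup>2
         \<le> exp (2 * x\<^sup>2) + 2 * sqrt (2 * pi) * x * exp (4 * x\<^sup>2)"
proof -
  define k where "k = sqrt (pi / 2)"
  define u where "u = k * x"
  define a where "a = pi\<^sup>2 / 4 - 2"
  define E where "E = exp (a * x\<^sup>2)"
  have pi1: "3.14 \<le> pi" "pi \<le> 3.15" using pi_approx by auto
  have k2: "k\<^sup>2 = pi / 2" unfolding k_def by simp
  have k1: "k \<ge> 1.2" unfolding k_def
    by (rule real_le_rsqrt) (use pi1 in \<open>auto simp: power2_eq_square\<close>)
  have pp: "pi*pi \<le> 3.15*3.15" "3.14*3.14 \<le> pi*pi"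
    using mult_mono[OF pi1(2) pi1(2)] mult_mono[OF pi1(1) pi1(1)] pi1 by auto
  have a0: "a \<ge> 0" "a \<le> 0.49" unfolding a_def using pp
    by (auto simp: power2_eq_square)
  have u0: "u \<ge> 0" using x k1 by (simp add: u_def)
  have E1: "E \<ge> 1" using a0 x by (simp add: E_def)
  have yk: "(pi/2*x) * sqrt (2 / pi) = u"
  proof -
    have "(pi/2) * sqrt (2/pi) = k"
    proof -
      have "(pi/2) * sqrt (2/pi) = sqrt ((pi/2)^2) * sqrt (2/pi)"
        using pi_gt_zero by simp
      also have "\<dots> = sqrt ((pi/2)^2 * (2/pi))" by (rule real_sqrt_mult[symmetric])
      also have "(pi/2)^2 * (2/pi) = pi/2" by (simp add: power2_eq_square field_simps)
      finally show ?thesis by (simp add: k_def)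
    qed
    then show ?thesis by (simp add: u_def)
  qed
  have y2: "(pi/2*x)\<^sup>2 / 2 * 2 = 2 * x\<^sup>2 + a * x\<^sup>2" by (simp add: a_def power2_eq_square field_simps)
  have c4: "2 * sqrt (2 * pi) * x = 4 * u"
  proof -
    have "sqrt (2*pi) = 2 * k"
    proof -
      have "2 * k = sqrt 4 * sqrt (pi/2)" by (simp add: k_def)
      also have "\<dots> = sqrt (4*(pi/2))" by (rule real_sqrt_mult[symmetric])
      also have "4*(pi/2) = 2*pi" by simp
      finally show ?thesis by simp
    qed
    then show ?thesis by (simp add: u_def)
  qed
  have LHS: "(exp ((pi/2*x)\<^sup>2 / 2) * (1 + (pi/2*x) * sqrt (2 / pi)))\<^sup>2 = exp (2*x\<^sup>2) * (E * (1+u)\<^sup>2)"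
  proof -
    have "(exp ((pi/2*x)\<^sup>2 / 2))\<^sup>2 = exp ((pi/2*x)\<^sup>2 / 2 * 2)"
      by (simp add: power2_eq_square mult_exp_exp)
    also have "\<dots> = exp (2*x\<^sup>2) * E" by (simp only: E_def mult_exp_exp y2)
    finally show ?thesis unfolding yk by (simp add: power_mult_distrib)
  qed
  have e4: "exp (4 * x\<^sup>2) = exp (2*x\<^sup>2) * (E * exp ((2 - a) * x\<^sup>2))"
    unfolding E_def mult_exp_exp by (rule arg_cong[where f=exp]) (simp add: algebra_simps)
  have F: "exp ((2 - a) * x\<^sup>2) \<ge> 1 + (2 - a) * x\<^sup>2" by (rule exp_ge_add_one_self)
  have Em: "E - 1 \<le> E * (a * x\<^sup>2)"
  proof -
    have "exp (- (a*x\<^sup>2)) \<ge> 1 - a * x\<^sup>2" using exp_ge_add_one_self[of "-(a*x\<^sup>2)"] by simp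
    then have "E * exp (- (a*x\<^sup>2)) \<ge> E * (1 - a * x\<^sup>2)" using E1 by (intro mult_left_mono) auto
    moreover have "E * exp (- (a*x\<^sup>2)) = 1" by (simp add: E_def exp_minus)
    ultimately show ?thesis by (simp add: algebra_simps)
  qed
  have poly: "a * x\<^sup>2 + u\<^sup>2 \<le> 2 * u + 4 * u * ((2 - a) * x\<^sup>2)"
  proof -
    have "a + k\<^sup>2 \<le> 2.1" using a0 k2 pi1 by simp
    have ku: "u\<^sup>2 = k\<^sup>2 * x\<^sup>2" by (simp add: u_def power_mult_distrib)
    have "a * x\<^sup>2 + u\<^sup>2 = (a + k\<^sup>2) * x\<^sup>2" by (simp add: ku algebra_simps)
    also have "\<dots> \<le> 2.1 * x\<^sup>2" using \<open>a + k\<^sup>2 \<le> 2.1\<close> by (intro mult_right_mono) auto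
    also have "\<dots> \<le> 2.4 * x + 7 * (x * x\<^sup>2)"
    proof (cases "x \<le> 1")
      case True then have "x * x \<le> x" using x by (simp add: mult_left_le)
      then have "2.1 * x\<^sup>2 \<le> 2.1 * x" by (simp add: power2_eq_square)
      moreover have "0 \<le> x * x\<^sup>2" using x by simp
      ultimately show ?thesis using x by linarith
    next
      case False then have "x * x \<le> x * (x * x)" using x by (simp add: mult_left_le)
      then have "2.1 * x\<^sup>2 \<le> 2.1 * (x * x\<^sup>2)" by (simp add: power2_eq_square)
      moreover have "0 \<le> 2.4 * x" "0 \<le> x * x\<^sup>2" using x by simp_all
      ultimately show ?thesis by linarith
    qed
    also have "\<dots> \<le> 2 * u + 4 * u * ((2 - a) * x\<^sup>2)"
    proof -
      have "1.2 * x \<le> k * x" using k1 x by (intro mult_right_mono) auto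
      then have "2.4 * x \<le> 2 * u" by (simp add: u_def)
      moreover have "7 * (x * x\<^sup>2) \<le> 4 * u * ((2 - a) * x\<^sup>2)"
      proof -
        have "1.2 * 1.51 \<le> k * (2 - a)" using k1 a0 by (intro mult_mono) auto
        then have "7 \<le> 4 * (k * (2 - a))" by simp
        then have "7 * (x * x\<^sup>2) \<le> (4 * (k * (2 - a))) * (x * x\<^sup>2)" using x by (intro mult_right_mono) auto
        then show ?thesis by (simp add: u_def algebra_simps)
      qed
      ultimately show ?thesis by linarith
    qed
    finally show ?thesis .
  qed
  have main: "E * (1+u)\<^sup>2 \<le> 1 + 4 * u * (E * exp ((2 - a) * x\<^sup>2))"
  proof -
    have "E * (1+u)\<^sup>2 = (E - 1) + 1 + E * (2*u + u\<^sup>2)" by (simp add: power2_eq_square algebra_simps)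
    also have "\<dots> \<le> E * (a * x\<^sup>2) + 1 + E * (2*u + u\<^sup>2)" using Em by simp
    also have "\<dots> = 1 + E * (a * x\<^sup>2 + u\<^sup>2 + 2 * u)" by (simp add: algebra_simps)
    also have "\<dots> \<le> 1 + E * (4 * u + 4 * u * ((2 - a) * x\<^sup>2))"
      using poly E1 by (intro add_left_mono mult_left_mono) auto
    also have "\<dots> = 1 + 4 * u * E * (1 + (2 - a) * x\<^sup>2)" by (simp add: algebra_simps)
    also have "\<dots> \<le> 1 + 4 * u * E * exp ((2 - a) * x\<^sup>2)"
      using F u0 E1 by (intro add_left_mono mult_left_mono) auto
    finally show ?thesis by (simp add: algebra_simps)
  qed
  have "exp (2*x\<^sup>2) * (E * (1+u)\<^sup>2) \<le> exp (2*x\<^sup>2) * (1 + 4 * u * (E * exp ((2 - a) * x\<^sup>2)))"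
    using main by (intro mult_left_mono) auto
  also have "\<dots> = exp (2 * x\<^sup>2) + 2 * sqrt (2 * pi) * x * exp (4 * x\<^sup>2)"
    using c4 e4 by (simp add: algebra_simps)
  finally show ?thesis using LHS by simp
qed

definition Fa :: "real \<Rightarrow> real \<Rightarrow> real" where
  "Fa t s = t * arcsin (sqrt (s / t)) - sqrt (s * (t - s))"

lemma Fa_deriv:
  assumes "0 < s" "s < t"
  shows "(Fa t has_real_derivative sqrt (s / (t - s))) (at s)"
proof -
  have t: "t > 0" using assms by simp
  define q where "q = sqrt (s * (t - s))"
  have q0: "q > 0" using assms by (simp add: q_def)
  have a1: "sqrt (s/t) < 1" using assms by (simp add: field_simps)
  have a2: "sqrt (s/t) > 0" using assms by simp
  have "((\<lambda>s. t * arcsin (sqrt (s / t)) - sqrt (s * (t - s))) has_real_derivative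
      t * (inverse (sqrt (1 - (sqrt (s/t))\<^sup>2)) * (inverse (sqrt (s/t)) / 2 * (1 / t)))
      - (inverse (sqrt (s * (t - s))) / 2 * (1 * (t - s) + s * (0 - 1)))) (at s)"
  proof -
    have d1: "((\<lambda>z. z / t) has_real_derivative 1 / t) (at s)"
      using t by (auto intro!: derivative_eq_intros)
    have d2: "((\<lambda>z. sqrt (z / t)) has_real_derivative inverse (sqrt (s/t)) / 2 * (1 / t)) (at s)"
      using DERIV_chain2[OF DERIV_real_sqrt d1] assms t by simp
    have d3: "((\<lambda>z. arcsin (sqrt (z / t))) has_real_derivative
        inverse (sqrt (1 - (sqrt (s/t))\<^sup>2)) * (inverse (sqrt (s/t)) / 2 * (1 / t))) (at s)"
      using DERIV_chain2[OF DERIV_arcsin d2] a1 a2 by simp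
    have d4: "((\<lambda>z. z * (t - z)) has_real_derivative 1 * (t - s) + s * (0 - 1)) (at s)"
      by (auto intro!: derivative_eq_intros)
    have d5: "((\<lambda>z. sqrt (z * (t - z))) has_real_derivative
        inverse (sqrt (s * (t - s))) / 2 * (1 * (t - s) + s * (0 - 1))) (at s)"
      using DERIV_chain2[OF DERIV_real_sqrt d4] assms by simp
    show ?thesis by (intro DERIV_diff DERIV_cmult d3 d5)
  qed
  moreover have "t * (inverse (sqrt (1 - (sqrt (s/t))\<^sup>2)) * (inverse (sqrt (s/t)) / 2 * (1 / t)))
      - (inverse (sqrt (s * (t - s))) / 2 * (1 * (t - s) + s * (0 - 1))) = sqrt (s / (t - s))"
  proof -
    have e1: "(sqrt (s/t))\<^sup>2 = s / t" using assms by simp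
    have e2: "sqrt (1 - s/t) * sqrt (s/t) = q / t"
    proof -
      have "sqrt (1 - s/t) * sqrt (s/t) = sqrt ((1 - s/t) * (s/t))" by (rule real_sqrt_mult[symmetric])
      also have "(1 - s/t) * (s/t) = (s * (t - s)) / t\<^sup>2" using t by (simp add: field_simps power2_eq_square)
      also have "sqrt \<dots> = q / t" using t by (simp add: q_def real_sqrt_divide)
      finally show ?thesis .
    qed
    have e3: "sqrt (s / (t - s)) = s / q"
    proof -
      have "s / q = sqrt (s\<^sup>2) / q" using assms by simp
      also have "\<dots> = sqrt (s\<^sup>2 / (s * (t - s)))" by (simp add: q_def real_sqrt_divide)
      also have "s\<^sup>2 / (s * (t - s)) = s / (t - s)" using assms by (simp add: power2_eq_square)
      finally show ?thesis by simp
    qed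
    have "t * (inverse (sqrt (1 - s/t)) * (inverse (sqrt (s/t)) / 2 * (1 / t))) = t / (2 * q)"
    proof -
      have "t * (inverse (sqrt (1 - s/t)) * (inverse (sqrt (s/t)) / 2 * (1 / t)))
          = 1 / (2 * (sqrt (1 - s/t) * sqrt (s/t)))" using t by (simp add: field_simps)
      also have "\<dots> = t / (2 * q)" using e2 t q0 by simp
      finally show ?thesis .
    qed
    then have P: "t * (inverse (sqrt (1 - (sqrt (s/t))\<^sup>2)) * (inverse (sqrt (s/t)) / 2 * (1 / t))) = t / (2 * q)"
      unfolding e1 .
    have Q: "inverse (sqrt (s * (t - s))) / 2 * (1 * (t - s) + s * (0 - 1)) = (t - 2 * s) / (2 * q)"
      unfolding q_def[symmetric] using q0 by (simp add: field_simps)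
    have R: "t / (2 * q) - (t - 2 * s) / (2 * q) = s / q" using q0 by (simp add: field_simps)
    show ?thesis unfolding P Q R e3 ..
  qed
  ultimately show ?thesis unfolding Fa_def[abs_def] by simp
qed

lemma Fa_cont: assumes "0 < t" shows "continuous_on {0..t} (Fa t)"
  unfolding Fa_def[abs_def] using assms
  by (intro continuous_intros continuous_on_arcsin')
     (auto simp: field_simps real_sqrt_le_1_iff intro: order.trans[OF _ real_sqrt_ge_zero])

lemma Fa_step:
  assumes "0 \<le> a" "a < b" "b \<le> t"
  shows "(b - a) * sqrt (a / (t - a)) \<le> Fa t b - Fa t a"
proof -
  have t: "t > 0" using assms by simp
  have "continuous_on {a..b} (Fa t)"
    by (rule continuous_on_subset[OF Fa_cont[OF t]]) (use assms in auto)
  moreover have "\<And>x. a < x \<Longrightarrow> x < b \<Longrightarrow> Fa t differentiable (at x)"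
    using Fa_deriv assms by (meson le_less_trans less_le_trans real_differentiable_def order.strict_trans2)
  ultimately obtain l z where z: "a < z" "z < b" "DERIV (Fa t) z :> l" "Fa t b - Fa t a = (b - a) * l"
    using MVT[OF \<open>a < b\<close>] by blast
  have "l = sqrt (z / (t - z))"
    using DERIV_unique[OF z(3) Fa_deriv[of z t]] z assms by auto
  moreover have "sqrt (a / (t - a)) \<le> sqrt (z / (t - z))"
    using z assms by (intro real_sqrt_le_mono) (auto simp: field_simps intro!: mult_mono)
  ultimately show ?thesis using z assms by (simp add: mult_left_mono)
qed

lemma Fa_0: "Fa t 0 = 0" by (simp add: Fa_def)
lemma Fa_t: "t > 0 \<Longrightarrow> Fa t t = t * pi / 2" by (simp add: Fa_def)

lemma grid_sum_bound:
  fixes N :: nat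
  assumes t: "t > 0" and N: "N > 0"
  shows "(\<Sum>j<N. (t / N) * sqrt ((real j * t / N) / (t - real j * t / N))) \<le> t * pi / 2"
proof -
  have "(\<Sum>j<N. (t / N) * sqrt ((real j * t / N) / (t - real j * t / N)))
      \<le> (\<Sum>j<N. Fa t (real (Suc j) * t / N) - Fa t (real j * t / N))"
  proof (rule sum_mono)
    fix j :: nat assume j: "j \<in> {..<N}"
    have "real (Suc j) \<le> real N" using j by simp
    then have "t * real (Suc j) \<le> t * real N" using t by (intro mult_left_mono) auto
    then have b: "real (Suc j) * t / N \<le> t" using t N by (simp add: field_simps)
    have "real (Suc j) * t / N - real j * t / N = t / N" using N by (simp add: field_simps)
    moreover have "(real (Suc j) * t / N - real j * t / N) * sqrt ((real j * t / N) / (t - real j * t / N))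
        \<le> Fa t (real (Suc j) * t / N) - Fa t (real j * t / N)"
      using t N b by (intro Fa_step) (auto simp: field_simps)
    ultimately show "(t / N) * sqrt ((real j * t / N) / (t - real j * t / N)) \<le> Fa t (real (Suc j) * t / N) - Fa t (real j * t / N)"
      by simp
  qed
  also have "\<dots> = Fa t (real N * t / N) - Fa t (real 0 * t / N)"
    by (rule sum_lessThan_telescope)
  also have "\<dots> = t * pi / 2" using N t by (simp add: Fa_0 Fa_t)
  finally show ?thesis .
qed

definition rr :: "real \<Rightarrow> nat \<Rightarrow> nat \<Rightarrow> real" where
  "rr t N k = real k * t / real N"

definition dW :: "(nat \<Rightarrow> real \<Rightarrow> 'a \<Rightarrow> real) \<Rightarrow> real \<Rightarrow> nat \<Rightarrow> nat \<times> nat \<Rightarrow> 'a \<Rightarrow> real" where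
  "dW W t N p \<omega> = W (fst p) (rr t N (Suc (snd p))) \<omega> - W (fst p) (rr t N (snd p)) \<omega>"

definition ISum :: "(nat \<Rightarrow> real \<Rightarrow> 'a \<Rightarrow> real) \<Rightarrow> real \<Rightarrow> nat \<Rightarrow> nat \<Rightarrow> nat \<Rightarrow> 'a \<Rightarrow> real" where
  "ISum W t N i j \<omega> = (\<Sum>k<j. (1 / (t - rr t N k)) * dW W t N (i, k) \<omega>)"

definition sig :: "real \<Rightarrow> nat \<Rightarrow> nat \<Rightarrow> real" where
  "sig t N j = sqrt (\<Sum>k<j. ((1 / (t - rr t N k)) * sqrt (t / N))\<^sup>2)"

lemma rr_mono: "t > 0 \<Longrightarrow> N > 0 \<Longrightarrow> rr t N k < rr t N (Suc k)"
  by (simp add: rr_def field_simps)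

lemma rr_diff: "N > 0 \<Longrightarrow> rr t N (Suc k) - rr t N k = t / N"
  by (simp add: rr_def field_simps)

lemma rr_lt: assumes "t > 0" "k < N" shows "rr t N k < t"
proof -
  have "real k * t < real N * t" using assms by simp
  then show ?thesis using assms by (simp add: rr_def field_simps)
qed

lemma wp_facts:
  assumes wp: "wiener_process M d W" and t: "t > 0" and N: "N > 0"
  shows "prob_space M"
    "prob_space.indep_vars M (\<lambda>_. borel) (dW W t N) ({..<d} \<times> {..<N})"
    "\<And>i k. i < d \<Longrightarrow> k < N \<Longrightarrow> distributed M lborel (dW W t N (i, k)) (\<lambda>x. ennreal (normal_density 0 (sqrt (t / N)) x))"
proof -
  have ts: "0 \<le> rr t N 0" "\<forall>k<N. rr t N k < rr t N (Suc k)" using t N rr_mono by (auto simp: rr_def)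
  have all: "prob_space.indep_vars M (\<lambda>_. borel)
          (\<lambda>(i, k) \<omega>. W i (rr t N (Suc k)) \<omega> - W i (rr t N k) \<omega>) ({..<d} \<times> {..<N}) \<and>
        (\<forall>i<d. \<forall>k<N. distributed M lborel (\<lambda>\<omega>. W i (rr t N (Suc k)) \<omega> - W i (rr t N k) \<omega>)
            (\<lambda>x. ennreal (normal_density 0 (sqrt (rr t N (Suc k) - rr t N k)) x)))"
    using wp ts unfolding wiener_process_def by blast
  have eq: "(\<lambda>(i, k) \<omega>. W i (rr t N (Suc k)) \<omega> - W i (rr t N k) \<omega>) = dW W t N"
    by (auto simp: fun_eq_iff dW_def)
  show "prob_space M" using wp by (simp add: wiener_process_def)
  show "prob_space.indep_vars M (\<lambda>_. borel) (dW W t N) ({..<d} \<times> {..<N})" using all eq by simp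
  fix i k assume "i < d" "k < N"
  then show "distributed M lborel (dW W t N (i, k)) (\<lambda>x. ennreal (normal_density 0 (sqrt (t / N)) x))"
    using all N by (simp add: rr_diff dW_def[abs_def])
qed

lemma normal_ISum:
  assumes wp: "wiener_process M d W" and t: "t > 0" and i: "i < d" and j: "1 \<le> j" "j < N"
  shows "distributed M lborel (ISum W t N i j) (\<lambda>x. ennreal (normal_density 0 (sig t N j) x))"
proof -
  have N: "N > 0" using j by simp
  interpret prob_space M using wp_facts[OF wp t N] by simp
  note ind = wp_facts(2)[OF wp t N]
  note dist = wp_facts(3)[OF wp t N]
  define a where "a k = 1 / (t - rr t N k)" for k
  have apos: "a k > 0" if "k < N" for k using rr_lt[OF t that] by (simp add: a_def)
  define X where "X p \<omega> = a (snd p) * dW W t N p \<omega>" for p \<omega>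
  have indX: "indep_vars (\<lambda>_. borel) X ({i} \<times> {..<j})"
  proof -
    have "indep_vars (\<lambda>_. borel) (dW W t N) ({i} \<times> {..<j})"
      by (rule indep_vars_subset[OF ind]) (use i j in auto)
    then have "indep_vars (\<lambda>_. borel) (\<lambda>p \<omega>. (\<lambda>x. a (snd p) * x) (dW W t N p \<omega>)) ({i} \<times> {..<j})"
      by (rule indep_vars_compose2) auto
    moreover have "X = (\<lambda>p \<omega>. a (snd p) * dW W t N p \<omega>)" by (simp add: fun_eq_iff X_def)
    ultimately show ?thesis by simp
  qed
  have distX: "distributed M lborel (X p) (normal_density 0 (a (snd p) * sqrt (t / N)))"
    if p: "p \<in> {i} \<times> {..<j}" for p
  proof -
    have k: "snd p < N" "fst p = i" using p j by auto
    have d0: "distributed M lborel (dW W t N p) (\<lambda>x. ennreal (normal_density 0 (sqrt (t / N)) x))"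
      using dist[of i "snd p"] k i by (cases p) auto
    have "distributed M lborel (\<lambda>x. 0 + a (snd p) * dW W t N p x)
        (normal_density (0 + a (snd p) * 0) (\<bar>a (snd p)\<bar> * sqrt (t / N)))"
      by (rule normal_density_affine[OF d0]) (use t N apos[OF k(1)] in auto)
    then show ?thesis using apos[OF k(1)] by (simp add: X_def[abs_def])
  qed
  have pe: "{i} \<times> {..<j} = (\<lambda>k. (i, k)) ` {..<j}" by auto
  have "distributed M lborel (\<lambda>x. \<Sum>p\<in>{i} \<times> {..<j}. X p x)
      (normal_density (\<Sum>p\<in>{i} \<times> {..<j}. 0) (sqrt (\<Sum>p\<in>{i} \<times> {..<j}. (a (snd p) * sqrt (t / N))\<^sup>2)))"
    by (rule sum_indep_normal[OF _ _ indX]) (use j t N apos distX in \<open>auto intro!: mult_pos_pos simp: lessThan_empty_iff\<close>)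
  moreover have "(\<lambda>x. \<Sum>p\<in>{i} \<times> {..<j}. X p x) = ISum W t N i j"
  proof
    fix x
    have "(\<Sum>p\<in>{i} \<times> {..<j}. X p x) = (\<Sum>k<j. X (i, k) x)"
      unfolding pe by (simp add: sum.reindex inj_on_def)
    then show "(\<Sum>p\<in>{i} \<times> {..<j}. X p x) = ISum W t N i j x"
      by (simp add: ISum_def X_def a_def)
  qed
  moreover have "(\<Sum>p\<in>{i} \<times> {..<j}. (a (snd p) * sqrt (t / N))\<^sup>2) = (\<Sum>k<j. ((1 / (t - rr t N k)) * sqrt (t / N))\<^sup>2)"
    unfolding pe by (simp add: sum.reindex inj_on_def a_def)
  ultimately show ?thesis by (simp add: sig_def)
qed

definition Yn :: "(nat \<Rightarrow> real \<Rightarrow> 'a \<Rightarrow> real) \<Rightarrow> real \<Rightarrow> nat \<Rightarrow> nat \<Rightarrow> 'a \<Rightarrow> real" where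
  "Yn W t N i \<omega> = (\<Sum>j<N. (t / N) * \<bar>ISum W t N i j \<omega>\<bar>)"

definition Hb :: "real \<Rightarrow> real" where
  "Hb y = exp (y\<^sup>2 / 2) * (1 + y * sqrt (2 / pi))"

lemma Hb_mono: "0 \<le> x \<Longrightarrow> x \<le> y \<Longrightarrow> Hb x \<le> Hb y"
  unfolding Hb_def
  by (intro mult_mono) (auto intro!: add_left_mono mult_right_mono power_mono)

lemma Hb_nonneg: "0 \<le> x \<Longrightarrow> 0 \<le> Hb x"
  unfolding Hb_def by simp

lemma sig_nonneg: "sig t N j \<ge> 0"
  unfolding sig_def by (simp add: sum_nonneg)

lemma sig_sq_bound:
  assumes t: "t > 0" and j: "j < N"
  shows "(sig t N j)\<^sup>2 \<le> rr t N j / (t * (t - rr t N j))"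
proof -
  have N: "N > 0" using j by simp
  have "(sig t N j)\<^sup>2 = (\<Sum>k<j. ((1 / (t - rr t N k)) * sqrt (t / N))\<^sup>2)"
    unfolding sig_def by (simp add: sum_nonneg)
  also have "\<dots> \<le> (\<Sum>k<j. 1 / (t - rr t N (Suc k)) - 1 / (t - rr t N k))"
  proof (rule sum_mono)
    fix k assume k: "k \<in> {..<j}"
    have a: "t - rr t N (Suc k) > 0" using rr_lt[OF t, of "Suc k" N] k j by simp
    have b: "t - rr t N k \<ge> t - rr t N (Suc k)" using rr_mono[OF t N, of k] by simp
    have "((1 / (t - rr t N k)) * sqrt (t / N))\<^sup>2 = (t / N) / (t - rr t N k)\<^sup>2"
      using t N by (simp add: power2_eq_square field_simps)
    also have "\<dots> \<le> (t / N) / ((t - rr t N k) * (t - rr t N (Suc k)))"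
      using a b t N by (intro divide_left_mono) (auto simp: power2_eq_square intro!: mult_left_mono mult_pos_pos)
    also have "\<dots> = 1 / (t - rr t N (Suc k)) - 1 / (t - rr t N k)"
      using a b rr_diff[OF N, of t k] by (simp add: field_simps)
    finally show "((1 / (t - rr t N k)) * sqrt (t / N))\<^sup>2 \<le> 1 / (t - rr t N (Suc k)) - 1 / (t - rr t N k)" .
  qed
  also have "\<dots> = 1 / (t - rr t N j) - 1 / (t - rr t N 0)"
    by (rule sum_lessThan_telescope)
  also have "\<dots> = rr t N j / (t * (t - rr t N j))"
    using rr_lt[OF t j] t by (simp add: rr_def[of t N 0] field_simps)
  finally show ?thesis .
qed

lemma sig_bound:
  assumes t: "t > 0" and j: "j < N"
  shows "sig t N j \<le> sqrt (rr t N j / (t - rr t N j)) / sqrt t"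
proof -
  have "sig t N j = sqrt ((sig t N j)\<^sup>2)" using sig_nonneg[of t N j] by simp
  also have "\<dots> \<le> sqrt (rr t N j / (t * (t - rr t N j)))"
    by (rule real_sqrt_le_mono[OF sig_sq_bound[OF t j]])
  also have "\<dots> = sqrt (rr t N j / (t - rr t N j)) / sqrt t"
  proof -
    have "rr t N j / (t * (t - rr t N j)) = (rr t N j / (t - rr t N j)) / t" by simp
    then show ?thesis by (simp only: real_sqrt_divide)
  qed
  finally show ?thesis .
qed

lemma sig_pos:
  assumes t: "t > 0" and j: "1 \<le> j" "j < N"
  shows "sig t N j > 0"
proof -
  have "0 < ((1 / (t - rr t N 0)) * sqrt (t / N))\<^sup>2" using t j by (simp add: rr_def)
  also have "\<dots> \<le> (\<Sum>k<j. ((1 / (t - rr t N k)) * sqrt (t / N))\<^sup>2)"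
    by (rule member_le_sum) (use j in auto)
  finally show ?thesis unfolding sig_def by simp
qed

lemma S_bound:
  assumes t: "t > 0" and N: "N > 0"
  shows "(\<Sum>j\<in>{1..<N}. (t / N) * sig t N j) \<le> pi / 2 * sqrt t"
proof -
  have "(\<Sum>j\<in>{1..<N}. (t / N) * sig t N j) \<le> (\<Sum>j<N. (t / N) * sig t N j)"
    by (rule sum_mono2) (use t sig_nonneg in auto)
  also have "\<dots> \<le> (\<Sum>j<N. (t / N) * (sqrt (rr t N j / (t - rr t N j)) / sqrt t))"
    using sig_bound[OF t] t by (intro sum_mono mult_left_mono) auto
  also have "\<dots> = (\<Sum>j<N. (t / N) * sqrt ((real j * t / N) / (t - real j * t / N))) / sqrt t"
    by (simp add: sum_divide_distrib rr_def)
  also have "\<dots> \<le> (t * pi / 2) / sqrt t"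
    using grid_sum_bound[OF t N] t by (intro divide_right_mono) auto
  also have "\<dots> = pi / 2 * sqrt t"
    using t by (simp add: field_simps)
  finally show ?thesis .
qed

lemma comp_bound:
  assumes wp: "wiener_process M d W" and t: "t > 0" and c: "c \<ge> 0" and i: "i < d" and N: "2 \<le> N"
  shows "(\<integral>\<^sup>+\<omega>. ennreal (exp (c * Yn W t N i \<omega>)) \<partial>M) \<le> ennreal (Hb (c * (pi / 2 * sqrt t)))"
proof -
  have N0: "N > 0" using N by simp
  define J where "J = {1..<N}"
  have J: "finite J" "J \<noteq> {}" using N by (auto simp: J_def)
  define S where "S = (\<Sum>j\<in>J. (t / N) * sig t N j)"
  have sp: "j \<in> J \<Longrightarrow> sig t N j > 0" for j using sig_pos[OF t] by (auto simp: J_def)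
  have S0: "S > 0" unfolding S_def using J sp t N0 by (intro sum_pos) auto
  have Sb: "S \<le> pi / 2 * sqrt t" unfolding S_def J_def using S_bound[OF t N0] .
  define \<theta> where "\<theta> j = (t / N) * sig t N j / S" for j
  define A where "A j \<omega> = c * (t / N) * \<bar>ISum W t N i j \<omega>\<bar>" for j \<omega>
  have th: "\<And>j. j \<in> J \<Longrightarrow> \<theta> j > 0" using sp S0 t N0 by (auto simp: \<theta>_def)
  have th1: "(\<Sum>j\<in>J. \<theta> j) = 1"
  proof -
    have "(\<Sum>j\<in>J. \<theta> j) = (\<Sum>j\<in>J. (t / N) * sig t N j) / S"
      unfolding \<theta>_def by (rule sum_divide_distrib[symmetric])
    then show ?thesis using S0 unfolding S_def by simp
  qed
  have distr: "distributed M lborel (ISum W t N i j) (\<lambda>x. ennreal (normal_density 0 (sig t N j) x))"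
    if "j \<in> J" for j using normal_ISum[OF wp t i] that by (auto simp: J_def)
  have meas: "A j \<in> borel_measurable M" if "j \<in> J" for j
  proof -
    have "ISum W t N i j \<in> borel_measurable M"
      using distributed_measurable[OF distr[OF that]] by simp
    then show ?thesis unfolding A_def[abs_def] by measurable
  qed
  have bnd: "(\<integral>\<^sup>+\<omega>. ennreal (exp (A j \<omega> / \<theta> j)) \<partial>M) \<le> ennreal (Hb (c * S))" if j: "j \<in> J" for j
  proof -
    define l where "l = c * S / sig t N j"
    have l0: "l \<ge> 0" using c S0 sp[OF j] by (simp add: l_def)
    have "A j \<omega> / \<theta> j = l * \<bar>ISum W t N i j \<omega>\<bar>" for \<omega>
      using sp[OF j] S0 t N0 by (simp add: A_def \<theta>_def l_def field_simps)
    then have "(\<integral>\<^sup>+\<omega>. ennreal (exp (A j \<omega> / \<theta> j)) \<partial>M) = (\<integral>\<^sup>+\<omega>. ennreal (exp (l * \<bar>ISum W t N i j \<omega>\<bar>)) \<partial>M)"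
      by simp
    also have "\<dots> = (\<integral>\<^sup>+x. ennreal (normal_density 0 (sig t N j) x) * ennreal (exp (l * \<bar>x\<bar>)) \<partial>lborel)"
      by (rule distributed_nn_integral[OF distr[OF j], symmetric]) measurable
    also have "\<dots> = (\<integral>\<^sup>+x. ennreal (normal_density 0 (sig t N j) x * exp (l * \<bar>x\<bar>)) \<partial>lborel)"
      by (simp add: ennreal_mult normal_density_nonneg)
    also have "\<dots> \<le> ennreal (exp (l\<^sup>2 * (sig t N j)\<^sup>2 / 2) * (1 + l * sig t N j * sqrt (2 / pi)))"
      by (rule gauss_abs_exp[OF sp[OF j] l0])
    also have "exp (l\<^sup>2 * (sig t N j)\<^sup>2 / 2) * (1 + l * sig t N j * sqrt (2 / pi)) = Hb (c * S)"
    proof -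
      have "l * sig t N j = c * S" using sp[OF j] by (simp add: l_def)
      moreover have "l\<^sup>2 * (sig t N j)\<^sup>2 = (c * S)\<^sup>2" using sp[OF j] by (simp add: l_def power2_eq_square)
      ultimately show ?thesis by (simp add: Hb_def)
    qed
    finally show ?thesis .
  qed
  have Yeq: "c * Yn W t N i \<omega> = (\<Sum>j\<in>J. A j \<omega>)" for \<omega>
  proof -
    have "{..<N} = insert 0 J" using N by (auto simp: J_def)
    moreover have "0 \<notin> J" by (simp add: J_def)
    ultimately have "Yn W t N i \<omega> = (\<Sum>j\<in>J. (t / N) * \<bar>ISum W t N i j \<omega>\<bar>)"
      using J by (simp add: Yn_def ISum_def)
    then show ?thesis by (simp add: A_def sum_distrib_left mult.assoc)
  qed
  have "(\<integral>\<^sup>+\<omega>. ennreal (exp (c * Yn W t N i \<omega>)) \<partial>M) = (\<integral>\<^sup>+\<omega>. ennreal (exp (\<Sum>j\<in>J. A j \<omega>)) \<partial>M)"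
    by (simp add: Yeq)
  also have "\<dots> \<le> ennreal (Hb (c * S))"
    by (rule holder_exp[OF J th th1 meas bnd]) (use Hb_nonneg S0 c in auto)
  also have "\<dots> \<le> ennreal (Hb (c * (pi / 2 * sqrt t)))"
    using Sb S0 c by (intro ennreal_leI Hb_mono mult_left_mono) auto
  finally show ?thesis .
qed

definition Yf :: "real \<Rightarrow> nat \<Rightarrow> real \<Rightarrow> nat \<Rightarrow> (nat \<times> nat \<Rightarrow> real) \<Rightarrow> ennreal" where
  "Yf t N c i x = ennreal (exp (c * (\<Sum>j<N. (t / N) * \<bar>\<Sum>k<j. (1 / (t - rr t N k)) * x (i, k)\<bar>)))"

lemma Yf_meas: "Yf t N c i \<in> borel_measurable (PiM ({i} \<times> {..<N}) (\<lambda>_. borel))"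
proof -
  have "(\<lambda>x. \<Sum>j<N. (t / N) * \<bar>\<Sum>k<j. (1 / (t - rr t N k)) * x (i, k)\<bar>)
      \<in> borel_measurable (PiM ({i} \<times> {..<N}) (\<lambda>_. borel))"
  proof (intro borel_measurable_sum borel_measurable_times borel_measurable_abs borel_measurable_const)
    fix j k assume "j \<in> {..<N}" "k \<in> {..<j}"
    then have "(i, k) \<in> {i} \<times> {..<N}" by auto
    then show "(\<lambda>x. x (i, k)) \<in> borel_measurable (PiM ({i} \<times> {..<N}) (\<lambda>_. borel))"
      by (rule measurable_component_singleton)
  qed
  then show ?thesis unfolding Yf_def[abs_def] by measurable
qed

lemma Yf_eq:
  "Yf t N c i (restrict (\<lambda>p. dW W t N p \<omega>) ({i} \<times> {..<N})) = ennreal (exp (c * Yn W t N i \<omega>))"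
  unfolding Yf_def Yn_def ISum_def
  by (intro arg_cong[where f="\<lambda>x. ennreal (exp (c * x))"] sum.cong refl arg_cong[where f="\<lambda>x. _ * \<bar>x\<bar>"]) auto

lemma all_bound:
  assumes wp: "wiener_process M d W" and t: "t > 0" and c: "c \<ge> 0" and N: "2 \<le> N"
  shows "(\<integral>\<^sup>+\<omega>. ennreal (exp (c * (\<Sum>i<d. Yn W t N i \<omega>))) \<partial>M) \<le> ennreal (Hb (c * (pi / 2 * sqrt t)) ^ d)"
proof -
  have N0: "N > 0" using N by simp
  interpret prob_space M using wp_facts[OF wp t N0] by simp
  note ind = wp_facts(2)[OF wp t N0]
  have ind2: "indep_vars (\<lambda>i. PiM ({i} \<times> {..<N}) (\<lambda>_. borel))
      (\<lambda>i \<omega>. restrict (\<lambda>p. dW W t N p \<omega>) ({i} \<times> {..<N})) {..<d}"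
    by (rule indep_vars_restrict[OF ind]) (auto simp: disjoint_family_on_def)
  have ind3: "indep_vars (\<lambda>_. borel) (\<lambda>i \<omega>. Yf t N c i (restrict (\<lambda>p. dW W t N p \<omega>) ({i} \<times> {..<N}))) {..<d}"
    by (rule indep_vars_compose2[OF ind2]) (rule Yf_meas)
  have ind4: "indep_vars (\<lambda>_. borel) (\<lambda>i \<omega>. ennreal (exp (c * Yn W t N i \<omega>))) {..<d}"
    using ind3 by (simp add: Yf_eq)
  have "(\<integral>\<^sup>+\<omega>. ennreal (exp (c * (\<Sum>i<d. Yn W t N i \<omega>))) \<partial>M)
      = (\<integral>\<^sup>+\<omega>. (\<Prod>i<d. ennreal (exp (c * Yn W t N i \<omega>))) \<partial>M)"
  proof (rule nn_integral_cong)
    fix \<omega>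
    have "exp (c * (\<Sum>i<d. Yn W t N i \<omega>)) = (\<Prod>i<d. exp (c * Yn W t N i \<omega>))"
      by (simp add: sum_distrib_left exp_sum)
    then show "ennreal (exp (c * (\<Sum>i<d. Yn W t N i \<omega>))) = (\<Prod>i<d. ennreal (exp (c * Yn W t N i \<omega>)))"
      by (simp add: prod_ennreal)
  qed
  also have "\<dots> = (\<Prod>i<d. \<integral>\<^sup>+\<omega>. ennreal (exp (c * Yn W t N i \<omega>)) \<partial>M)"
    by (rule indep_vars_nn_integral[OF _ ind4]) auto
  also have "\<dots> \<le> (\<Prod>i<d. ennreal (Hb (c * (pi / 2 * sqrt t))))"
    by (intro prod_mono_ennreal comp_bound[OF wp t c _ N]) auto
  also have "\<dots> = ennreal (Hb (c * (pi / 2 * sqrt t)) ^ d)"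
    using Hb_nonneg[of "c * (pi / 2 * sqrt t)"] c t by (simp add: prod_ennreal ennreal_power)
  finally show ?thesis .
qed

lemma abel_sum:
  fixes a b :: "nat \<Rightarrow> real"
  shows "(\<Sum>k<j. a k * (b (Suc k) - b k)) = a j * b j - a 0 * b 0 - (\<Sum>k<j. (a (Suc k) - a k) * b (Suc k))"
  by (induction j) (simp_all add: algebra_simps)

lemma inv_deriv:
  fixes r t :: real
  assumes "r < t"
  shows "((\<lambda>r. 1 / (t - r)) has_real_derivative 1 / (t - r)\<^sup>2) (at r within S)"
  using assms by (auto intro!: derivative_eq_intros simp: power2_eq_square field_simps)

lemma inv_has_integral:
  fixes u v t :: real
  assumes "u \<le> v" "v < t"
  shows "((\<lambda>r. 1 / (t - r)\<^sup>2) has_integral (1 / (t - v) - 1 / (t - u))) {u..v}"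
proof -
  have "\<And>x. x \<in> {u..v} \<Longrightarrow> ((\<lambda>r. 1 / (t - r)) has_vector_derivative 1 / (t - x)\<^sup>2) (at x within {u..v})"
    using assms by (auto simp: has_real_derivative_iff_has_vector_derivative[symmetric] intro!: inv_deriv)
  from fundamental_theorem_of_calculus[of u v "\<lambda>r. 1 / (t - r)" "\<lambda>r. 1 / (t - r)\<^sup>2", OF assms(1) this]
  show ?thesis by simp
qed

lemma g_integrable:
  fixes B :: "real \<Rightarrow> real"
  assumes "continuous_on {u..v} B" "v < t"
  shows "(\<lambda>r. B r / (t - r)\<^sup>2) integrable_on {u..v}"
  using assms by (intro integrable_continuous_interval continuous_intros) auto

lemma step_bound:
  fixes B :: "real \<Rightarrow> real"
  assumes cB: "continuous_on {u..v} B" and uv: "u \<le> v" "v < t"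
    and e: "\<And>r. r \<in> {u..v} \<Longrightarrow> \<bar>B v - B r\<bar> \<le> e"
  shows "\<bar>(1 / (t - v) - 1 / (t - u)) * B v - integral {u..v} (\<lambda>r. B r / (t - r)\<^sup>2)\<bar>
         \<le> e * (1 / (t - v) - 1 / (t - u))"
proof -
  have ig: "(\<lambda>r. B r / (t - r)\<^sup>2) integrable_on {u..v}" by (rule g_integrable[OF cB uv(2)])
  have h1: "((\<lambda>r. B v * (1 / (t - r)\<^sup>2)) has_integral B v * (1 / (t - v) - 1 / (t - u))) {u..v}"
    by (rule has_integral_mult_right[OF inv_has_integral[OF uv]])
  have h2: "((\<lambda>r. e * (1 / (t - r)\<^sup>2)) has_integral e * (1 / (t - v) - 1 / (t - u))) {u..v}"
    by (rule has_integral_mult_right[OF inv_has_integral[OF uv]])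
  have "integral {u..v} (\<lambda>r. B v * (1 / (t - r)\<^sup>2) - B r / (t - r)\<^sup>2)
      = B v * (1 / (t - v) - 1 / (t - u)) - integral {u..v} (\<lambda>r. B r / (t - r)\<^sup>2)"
    using integral_diff[OF has_integral_integrable[OF h1] ig] integral_unique[OF h1] by simp
  moreover have "norm (integral {u..v} (\<lambda>r. B v * (1 / (t - r)\<^sup>2) - B r / (t - r)\<^sup>2))
      \<le> integral {u..v} (\<lambda>r. e * (1 / (t - r)\<^sup>2))"
  proof (rule integral_norm_bound_integral)
    show "(\<lambda>r. B v * (1 / (t - r)\<^sup>2) - B r / (t - r)\<^sup>2) integrable_on {u..v}"
      by (rule integrable_diff[OF has_integral_integrable[OF h1] ig])
    show "(\<lambda>r. e * (1 / (t - r)\<^sup>2)) integrable_on {u..v}"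
      by (rule has_integral_integrable[OF h2])
    fix r assume r: "r \<in> {u..v}"
    have "B v * (1 / (t - r)\<^sup>2) - B r / (t - r)\<^sup>2 = (B v - B r) / (t - r)\<^sup>2"
      by (simp add: diff_divide_distrib)
    moreover have "\<bar>(B v - B r) / (t - r)\<^sup>2\<bar> \<le> e / (t - r)\<^sup>2"
      using e[OF r] by (simp add: abs_div divide_right_mono)
    ultimately show "norm (B v * (1 / (t - r)\<^sup>2) - B r / (t - r)\<^sup>2) \<le> e * (1 / (t - r)\<^sup>2)"
      by simp
  qed
  moreover have "integral {u..v} (\<lambda>r. e * (1 / (t - r)\<^sup>2)) = e * (1 / (t - v) - 1 / (t - u))"
    by (rule integral_unique[OF h2])
  ultimately show ?thesis by (simp add: mult.commute)
qed


lemma D_bound: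
  fixes B :: "real \<Rightarrow> real" and N :: nat
  assumes t: "t > 0" and cB: "continuous_on {0..t} B"
    and unif: "\<And>x y. x \<in> {0..t} \<Longrightarrow> y \<in> {0..t} \<Longrightarrow> \<bar>x - y\<bar> \<le> t / N \<Longrightarrow> \<bar>B x - B y\<bar> \<le> e"
    and j: "j < N"
  shows "\<bar>(\<Sum>k<j. (1 / (t - rr t N (Suc k)) - 1 / (t - rr t N k)) * B (rr t N (Suc k)))
           - integral {0..rr t N j} (\<lambda>r. B r / (t - r)\<^sup>2)\<bar> \<le> e * (1 / (t - rr t N j) - 1 / t)"
  using j
proof (induction j)
  case 0
  then show ?case by (simp add: rr_def)
next
  case (Suc j)
  have N: "N > 0" using Suc by simp
  define u where "u = rr t N j"
  define v where "v = rr t N (Suc j)"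
  have u0: "0 \<le> u" using t by (simp add: u_def rr_def)
  have uv: "u \<le> v" using rr_mono[OF t N, of j] by (simp add: u_def v_def)
  have vt: "v < t" using rr_lt[OF t Suc.prems] by (simp add: v_def)
  have vu: "v - u = t / N" using rr_diff[OF N] by (simp add: u_def v_def)
  have cBv: "continuous_on {0..v} B" by (rule continuous_on_subset[OF cB]) (use vt in auto)
  have comb: "integral {0..u} (\<lambda>r. B r / (t - r)\<^sup>2) + integral {u..v} (\<lambda>r. B r / (t - r)\<^sup>2)
      = integral {0..v} (\<lambda>r. B r / (t - r)\<^sup>2)"
    by (rule Henstock_Kurzweil_Integration.integral_combine[OF u0 uv g_integrable[OF cBv vt]])
  have st: "\<bar>(1 / (t - v) - 1 / (t - u)) * B v - integral {u..v} (\<lambda>r. B r / (t - r)\<^sup>2)\<bar>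
         \<le> e * (1 / (t - v) - 1 / (t - u))"
  proof (rule step_bound[OF _ uv vt])
    show "continuous_on {u..v} B" by (rule continuous_on_subset[OF cB]) (use u0 vt in auto)
    fix r assume r: "r \<in> {u..v}"
    show "\<bar>B v - B r\<bar> \<le> e"
      by (rule unif) (use r u0 vt vu in auto)
  qed
  have IH: "\<bar>(\<Sum>k<j. (1 / (t - rr t N (Suc k)) - 1 / (t - rr t N k)) * B (rr t N (Suc k)))
           - integral {0..u} (\<lambda>r. B r / (t - r)\<^sup>2)\<bar> \<le> e * (1 / (t - u) - 1 / t)"
    using Suc by (simp add: u_def)
  show ?case
    using IH st comb unfolding u_def[symmetric] v_def[symmetric]
    by (simp add: u_def[symmetric] v_def[symmetric] algebra_simps)
qed

definition ISB :: "(real \<Rightarrow> real) \<Rightarrow> real \<Rightarrow> nat \<Rightarrow> nat \<Rightarrow> real" where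
  "ISB B t N j = (\<Sum>k<j. (1 / (t - rr t N k)) * (B (rr t N (Suc k)) - B (rr t N k)))"

definition Xp :: "(real \<Rightarrow> real) \<Rightarrow> real \<Rightarrow> real \<Rightarrow> real" where
  "Xp B t s = 1 / (t - s) * B s - integral {0..s} (\<lambda>r. B r / (t - r)\<^sup>2)"

definition Jn :: "real \<Rightarrow> real \<Rightarrow> nat \<Rightarrow> nat" where
  "Jn t s n = nat \<lfloor>s * real (n + 2) / t\<rfloor>"

lemma Jn_props:
  assumes t: "t > 0" and s: "0 \<le> s" "s < t"
  shows "Jn t s n < n + 2" "rr t (n + 2) (Jn t s n) \<le> s" "s < rr t (n + 2) (Suc (Jn t s n))"
proof -
  define x where "x = s * real (n + 2) / t"
  have x0: "0 \<le> x" using t s by (simp add: x_def)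
  have "s * real (n + 2) < t * real (n + 2)" by (rule mult_strict_right_mono) (use s in auto)
  then have xl: "x < real (n + 2)" using t by (simp add: x_def field_simps)
  have fl: "real (Jn t s n) = real_of_int \<lfloor>x\<rfloor>" using x0 unfolding Jn_def x_def[symmetric] by simp
  have a: "real (Jn t s n) \<le> x" using fl by simp
  have b: "x < real (Jn t s n) + 1" using fl by linarith
  show "Jn t s n < n + 2" using a xl by linarith
  show "rr t (n + 2) (Jn t s n) \<le> s" using a t by (simp add: rr_def x_def field_simps)
  show "s < rr t (n + 2) (Suc (Jn t s n))" using b t by (simp add: rr_def x_def field_simps)
qed

lemma ISB_decomp:
  fixes B :: "real \<Rightarrow> real"
  assumes B0: "B 0 = 0"
  shows "ISB B t N j = Xp B t (rr t N j)
     - ((\<Sum>k<j. (1 / (t - rr t N (Suc k)) - 1 / (t - rr t N k)) * B (rr t N (Suc k)))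
        - integral {0..rr t N j} (\<lambda>r. B r / (t - r)\<^sup>2))"
  using abel_sum[of "\<lambda>k. 1 / (t - rr t N k)" "\<lambda>k. B (rr t N k)" j] B0
  by (simp add: ISB_def Xp_def rr_def)

lemma ISB_tendsto:
  fixes B :: "real \<Rightarrow> real"
  assumes t: "t > 0" and cB: "continuous_on {0..t} B" and B0: "B 0 = 0" and s: "0 \<le> s" "s < t"
  shows "(\<lambda>n. ISB B t (n + 2) (Jn t s n)) \<longlonglongrightarrow> Xp B t s"
proof (rule tendstoI)
  fix \<epsilon> :: real assume \<epsilon>: "\<epsilon> > 0"
  define fs where "fs = 1 / (t - s)"
  have fs: "fs > 0" using s by (simp add: fs_def)
  define e1 where "e1 = \<epsilon> / (2 * fs)"
  have e1: "e1 > 0" using \<epsilon> fs by (simp add: e1_def)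
  have "uniformly_continuous_on {0..t} B" by (rule compact_uniformly_continuous[OF cB compact_Icc])
  then obtain \<delta> where \<delta>: "\<delta> > 0" "\<And>x x'. x \<in> {0..t} \<Longrightarrow> x' \<in> {0..t} \<Longrightarrow> dist x' x < \<delta> \<Longrightarrow> dist (B x') (B x) < e1"
    unfolding uniformly_continuous_on_def using e1 by metis
  have cX: "continuous_on {0..s} (Xp B t)"
  proof -
    have cBs: "continuous_on {0..s} B" by (rule continuous_on_subset[OF cB]) (use s in auto)
    have c1: "continuous_on {0..s} (\<lambda>x. integral {0..x} (\<lambda>r. B r / (t - r)\<^sup>2))"
      by (rule indefinite_integral_continuous_1[OF g_integrable[OF cBs s(2)]])
    have c2: "continuous_on {0..s} (\<lambda>x. 1 / (t - x) * B x)"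
      using s cBs by (intro continuous_intros) auto
    show ?thesis unfolding Xp_def[abs_def] by (rule continuous_on_diff[OF c2 c1])
  qed
  then obtain d where d: "d > 0" "\<And>x'. x' \<in> {0..s} \<Longrightarrow> dist x' s < d \<Longrightarrow> dist (Xp B t x') (Xp B t s) < \<epsilon> / 2"
    unfolding continuous_on_iff using s \<epsilon> by (metis atLeastAtMost_iff half_gt_zero order_refl)
  define m where "m = min \<delta> d"
  have m: "m > 0" using \<delta> d by (simp add: m_def)
  obtain n0 :: nat where n0: "t / m < n0" using reals_Archimedean2 by blast
  show "eventually (\<lambda>n. dist (ISB B t (n + 2) (Jn t s n)) (Xp B t s) < \<epsilon>) sequentially"
    unfolding eventually_sequentially
  proof (intro exI allI impI)
    fix n assume n: "n0 \<le> n"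
    define N where "N = n + 2"
    define j where "j = Jn t s n"
    have N0: "N > 0" by (simp add: N_def)
    have hN: "t / N < m"
    proof -
      have "t / m < real N" using n0 n by (simp add: N_def)
      then show ?thesis using m t N0 by (simp add: field_simps)
    qed
    have jN: "j < N" and rj: "rr t N j \<le> s" and rj1: "s < rr t N (Suc j)"
      using Jn_props[OF t s, of n] by (simp_all add: N_def j_def)
    have rj0: "0 \<le> rr t N j" using t by (simp add: rr_def)
    have close: "s - rr t N j < t / N" using rj1 rr_diff[OF N0, of t j] by simp
    have unif: "\<bar>B x - B y\<bar> \<le> e1" if "x \<in> {0..t}" "y \<in> {0..t}" "\<bar>x - y\<bar> \<le> t / N" for x y
      using \<delta>(2)[OF that(2) that(1)] that(3) hN by (simp add: dist_real_def m_def)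
    have D: "\<bar>(\<Sum>k<j. (1 / (t - rr t N (Suc k)) - 1 / (t - rr t N k)) * B (rr t N (Suc k)))
           - integral {0..rr t N j} (\<lambda>r. B r / (t - r)\<^sup>2)\<bar> \<le> e1 * (1 / (t - rr t N j) - 1 / t)"
      by (rule D_bound[OF t cB unif jN])
    have fj: "1 / (t - rr t N j) \<le> fs" using rj s by (simp add: fs_def frac_le)
    have tpos: "0 < 1 / t" using t by simp
    have "1 / (t - rr t N j) - 1 / t \<le> fs" using fj tpos by linarith
    then have "e1 * (1 / (t - rr t N j) - 1 / t) \<le> e1 * fs"
      using e1 by (intro mult_left_mono) auto
    also have "\<dots> = \<epsilon> / 2" using fs by (simp add: e1_def)
    finally have D2: "\<bar>(\<Sum>k<j. (1 / (t - rr t N (Suc k)) - 1 / (t - rr t N k)) * B (rr t N (Suc k)))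
           - integral {0..rr t N j} (\<lambda>r. B r / (t - r)\<^sup>2)\<bar> \<le> \<epsilon> / 2" using D by linarith
    have X2: "dist (Xp B t (rr t N j)) (Xp B t s) < \<epsilon> / 2"
      by (rule d(2)) (use rj rj0 close hN in \<open>auto simp: dist_real_def m_def\<close>)
    have "ISB B t (n + 2) (Jn t s n) = ISB B t N j" by (simp add: N_def j_def)
    then show "dist (ISB B t (n + 2) (Jn t s n)) (Xp B t s) < \<epsilon>"
      using ISB_decomp[of B t N j, OF B0] X2 D2
      unfolding dist_real_def by linarith
  qed
qed

definition SF :: "(real \<Rightarrow> real) \<Rightarrow> real \<Rightarrow> nat \<Rightarrow> real \<Rightarrow> real" where
  "SF B t N s = (\<Sum>j<N. indicator {rr t N j ..< rr t N (Suc j)} s * \<bar>ISB B t N j\<bar>)"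

lemma SF_nn_integral:
  assumes t: "t > 0" and N: "N > 0"
  shows "(\<integral>\<^sup>+s. ennreal (SF B t N s) \<partial>lborel) = ennreal (\<Sum>j<N. (t / N) * \<bar>ISB B t N j\<bar>)"
proof -
  have "(\<integral>\<^sup>+s. ennreal (SF B t N s) \<partial>lborel)
      = (\<integral>\<^sup>+s. (\<Sum>j<N. ennreal \<bar>ISB B t N j\<bar> * indicator {rr t N j ..< rr t N (Suc j)} s) \<partial>lborel)"
    unfolding SF_def
    by (intro nn_integral_cong, subst sum_ennreal[symmetric]) (auto intro!: sum.cong simp: indicator_def)
  also have "\<dots> = (\<Sum>j<N. \<integral>\<^sup>+s. ennreal \<bar>ISB B t N j\<bar> * indicator {rr t N j ..< rr t N (Suc j)} s \<partial>lborel)"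
    by (rule nn_integral_sum) auto
  also have "\<dots> = (\<Sum>j<N. ennreal \<bar>ISB B t N j\<bar> * ennreal (t / N))"
  proof (rule sum.cong[OF refl])
    fix j assume "j \<in> {..<N}"
    have le: "rr t N j \<le> rr t N (Suc j)" using rr_mono[OF t N, of j] by simp
    show "(\<integral>\<^sup>+s. ennreal \<bar>ISB B t N j\<bar> * indicator {rr t N j ..< rr t N (Suc j)} s \<partial>lborel)
        = ennreal \<bar>ISB B t N j\<bar> * ennreal (t / N)"
      using le by (simp add: nn_integral_cmult_indicator rr_diff[OF N])
  qed
  also have "\<dots> = ennreal (\<Sum>j<N. (t / N) * \<bar>ISB B t N j\<bar>)"
    using t by (subst sum_ennreal[symmetric]) (auto intro!: sum.cong simp: ennreal_mult[symmetric] mult.commute)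
  finally show ?thesis .
qed

lemma rr_le_mono: "t > 0 \<Longrightarrow> N > 0 \<Longrightarrow> i \<le> j \<Longrightarrow> rr t N i \<le> rr t N j"
  by (simp add: rr_def divide_right_mono mult_right_mono)

lemma SF_at:
  assumes t: "t > 0" and s: "0 \<le> s" "s < t"
  shows "SF B t (n + 2) s = \<bar>ISB B t (n + 2) (Jn t s n)\<bar>"
proof -
  define N where "N = n + 2"
  define J where "J = Jn t s n"
  have N0: "N > 0" by (simp add: N_def)
  have JN: "J < N" and rJ: "rr t N J \<le> s" and rJ1: "s < rr t N (Suc J)"
    using Jn_props[OF t s, of n] by (simp_all add: N_def J_def)
  have ind: "indicator {rr t N j ..< rr t N (Suc j)} s = (if j = J then 1 else (0::real))" for j
  proof (cases "j = J")
    case True then show ?thesis using rJ rJ1 by simp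
  next
    case False
    then consider "j < J" | "J < j" by linarith
    then show ?thesis
    proof cases
      case 1
      then have "rr t N (Suc j) \<le> rr t N J" using rr_le_mono[OF t N0] by simp
      then show ?thesis using rJ False by (simp add: indicator_def)
    next
      case 2
      then have "rr t N (Suc J) \<le> rr t N j" using rr_le_mono[OF t N0] by simp
      then show ?thesis using rJ1 False by (simp add: indicator_def)
    qed
  qed
  have "SF B t N s = (\<Sum>j<N. (if j = J then \<bar>ISB B t N J\<bar> else 0))"
    unfolding SF_def by (intro sum.cong refl) (simp add: ind)
  also have "\<dots> = \<bar>ISB B t N J\<bar>" using JN by simp
  finally show ?thesis by (simp add: N_def J_def)
qed

lemma SF_meas[measurable]: "SF B t N \<in> borel_measurable borel"
  unfolding SF_def[abs_def] by measurable

lemma ennreal_integral_le_nn: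
  fixes f :: "'a \<Rightarrow> real"
  assumes "\<And>x. 0 \<le> f x"
  shows "ennreal (integral\<^sup>L M f) \<le> (\<integral>\<^sup>+x. ennreal (f x) \<partial>M)"
proof (cases "integrable M f")
  case True
  then show ?thesis using assms by (simp add: nn_integral_eq_integral)
next
  case False
  then show ?thesis by (simp add: not_integrable_integral_eq)
qed

lemma path_lower:
  fixes B F :: "real \<Rightarrow> real"
  assumes t: "t > 0" and cB: "continuous_on {0..t} B" and B0: "B 0 = 0"
    and F: "\<And>s. 0 \<le> s \<Longrightarrow> s < t \<Longrightarrow> F s = Xp B t s"
  shows "ennreal (LINT s:{0..t}|lborel. \<bar>F s\<bar>)
     \<le> liminf (\<lambda>n. ennreal (\<Sum>j<n + 2. (t / real (n + 2)) * \<bar>ISB B t (n + 2) j\<bar>))"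
proof -
  have "ennreal (LINT s:{0..t}|lborel. \<bar>F s\<bar>) \<le> (\<integral>\<^sup>+s. ennreal (indicator {0..t} s * \<bar>F s\<bar>) \<partial>lborel)"
    unfolding set_lebesgue_integral_def real_scaleR_def by (rule ennreal_integral_le_nn) simp
  also have "\<dots> = (\<integral>\<^sup>+s. ennreal (indicator {0..<t} s * \<bar>Xp B t s\<bar>) \<partial>lborel)"
  proof (rule nn_integral_cong_AE)
    show "AE s in lborel. ennreal (indicator {0..t} s * \<bar>F s\<bar>) = ennreal (indicator {0..<t} s * \<bar>Xp B t s\<bar>)"
      using AE_lborel_singleton[of t]
      by eventually_elim (auto simp: indicator_def F)
  qed
  also have "\<dots> \<le> (\<integral>\<^sup>+s. liminf (\<lambda>n. ennreal (SF B t (n + 2) s)) \<partial>lborel)"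
  proof (rule nn_integral_mono)
    fix s :: real
    show "ennreal (indicator {0..<t} s * \<bar>Xp B t s\<bar>) \<le> liminf (\<lambda>n. ennreal (SF B t (n + 2) s))"
    proof (cases "0 \<le> s \<and> s < t")
      case True
      then have "(\<lambda>n. ennreal (SF B t (n + 2) s)) \<longlonglongrightarrow> ennreal \<bar>Xp B t s\<bar>"
        using SF_at[OF t, of s] ISB_tendsto[OF t cB B0, of s]
        by (simp add: tendsto_rabs)
      then have "liminf (\<lambda>n. ennreal (SF B t (n + 2) s)) = ennreal \<bar>Xp B t s\<bar>"
        by (rule lim_imp_Liminf[rotated]) simp
      then show ?thesis using True by simp
    next
      case False then show ?thesis by simp
    qed
  qed
  also have "\<dots> \<le> liminf (\<lambda>n. \<integral>\<^sup>+s. ennreal (SF B t (n + 2) s) \<partial>lborel)"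
    by (rule nn_integral_liminf) measurable
  also have "\<dots> = liminf (\<lambda>n. ennreal (\<Sum>j<n + 2. (t / real (n + 2)) * \<bar>ISB B t (n + 2) j\<bar>))"
    using SF_nn_integral[OF t] by simp
  finally show ?thesis .
qed

lemma Hb_final:
  assumes t: "t > 0" and c: "c \<ge> 0"
  shows "Hb (c * (pi / 2 * sqrt t)) ^ d
    \<le> (exp (2 * c^2 * t) + 2 * c * sqrt (2 * pi * t) * exp (4 * c^2 * t)) powr (real d / 2)"
proof -
  define x where "x = c * sqrt t"
  define K where "K = exp (2 * c^2 * t) + 2 * c * sqrt (2 * pi * t) * exp (4 * c^2 * t)"
  have x0: "x \<ge> 0" using c t by (simp add: x_def)
  have K0: "K > 0" unfolding K_def using c t by (intro add_pos_nonneg) auto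
  have Kx: "K = exp (2 * x\<^sup>2) + 2 * sqrt (2 * pi) * x * exp (4 * x\<^sup>2)"
    using t by (simp add: K_def x_def power_mult_distrib real_sqrt_mult mult.assoc mult.left_commute)
  have Hx: "Hb (c * (pi / 2 * sqrt t)) = exp ((pi/2*x)\<^sup>2 / 2) * (1 + (pi/2*x) * sqrt (2 / pi))"
    unfolding Hb_def x_def by (simp add: algebra_simps)
  have H0: "Hb (c * (pi / 2 * sqrt t)) \<ge> 0" using c t by (intro Hb_nonneg) auto
  have "(Hb (c * (pi / 2 * sqrt t)))\<^sup>2 \<le> K" unfolding Hx Kx by (rule final_ineq[OF x0])
  then have "Hb (c * (pi / 2 * sqrt t)) \<le> sqrt K" using H0 by (simp add: real_le_rsqrt)
  then have "Hb (c * (pi / 2 * sqrt t)) ^ d \<le> (sqrt K) ^ d" using H0 by (intro power_mono) auto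
  also have "(sqrt K) ^ d = K powr (real d / 2)"
  proof -
    have "(sqrt K) ^ d = (K powr (1/2)) powr (real d)"
      using K0 by (simp add: powr_half_sqrt powr_realpow)
    also have "\<dots> = K powr (real d / 2)" by (simp add: powr_powr)
    finally show ?thesis .
  qed
  finally show ?thesis by (simp add: K_def)
qed

lemma ev_from_liminf:
  fixes a :: real and b :: "nat \<Rightarrow> real"
  assumes le: "ennreal a \<le> liminf (\<lambda>n. ennreal (b n))" and b: "\<And>n. b n \<ge> 0" and e: "e > 0"
  shows "eventually (\<lambda>n. a - e < b n) sequentially"
proof (cases "a - e < 0")
  case True
  have "a - e < b n" for n using True b[of n] by linarith
  then show ?thesis by simp
next
  case False
  then have "ennreal (a - e) < ennreal a" using e by (subst ennreal_less_iff) auto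
  then have "eventually (\<lambda>n. ennreal (a - e) < ennreal (b n)) sequentially"
    using le by (auto simp: le_Liminf_iff)
  then show ?thesis
    by eventually_elim (use False in \<open>auto simp: ennreal_less_iff\<close>)
qed

lemma Yn_meas:
  assumes wp: "wiener_process M d W" and t: "t > 0" and i: "i < d"
  shows "Yn W t N i \<in> borel_measurable M"
proof -
  have Wm: "\<And>r. r \<ge> 0 \<Longrightarrow> W i r \<in> borel_measurable M"
    using wp i by (auto simp: wiener_process_def)
  have rr0: "\<And>k. rr t N k \<ge> 0" using t by (simp add: rr_def)
  have "\<And>k. dW W t N (i, k) \<in> borel_measurable M"
    unfolding dW_def[abs_def] using Wm[OF rr0] by simp
  then show ?thesis
    unfolding Yn_def[abs_def] ISum_def[abs_def]
    by (intro borel_measurable_sum borel_measurable_times borel_measurable_abs borel_measurable_const) auto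
qed

lemma comp_pathwise:
  assumes wp: "wiener_process M d W" and t: "t > 0" and i: "i < d" and \<omega>: "\<omega> \<in> space M"
  shows "ennreal (LINT s:{0..t}|lborel. \<bar>wiener_integral (\<lambda>r. 1 / (t - r)) (W i) s \<omega>\<bar>)
     \<le> liminf (\<lambda>n. ennreal (Yn W t (n + 2) i \<omega>))"
proof -
  define B where "B r = W i r \<omega>" for r
  have B0: "B 0 = 0" and cB0: "continuous_on {0..} B"
    using wp i \<omega> by (auto simp: wiener_process_def B_def[abs_def])
  have cB: "continuous_on {0..t} B" by (rule continuous_on_subset[OF cB0]) auto
  have F: "wiener_integral (\<lambda>r. 1 / (t - r)) (W i) s \<omega> = Xp B t s" if s: "0 \<le> s" "s < t" for s
  proof -
    have "integral {0..s} (\<lambda>r. deriv (\<lambda>r. 1 / (t - r)) r * W i r \<omega>) = integral {0..s} (\<lambda>r. B r / (t - r)\<^sup>2)"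
    proof (rule Henstock_Kurzweil_Integration.integral_cong)
      fix r assume "r \<in> {0..s}"
      then have "r < t" using s by simp
      then have "deriv (\<lambda>r. 1 / (t - r)) r = 1 / (t - r)\<^sup>2"
        by (intro DERIV_imp_deriv inv_deriv)
      then show "deriv (\<lambda>r. 1 / (t - r)) r * W i r \<omega> = B r / (t - r)\<^sup>2" by (simp add: B_def)
    qed
    then show ?thesis by (simp add: wiener_integral_def Xp_def B_def)
  qed
  have Y: "Yn W t N i \<omega> = (\<Sum>j<N. (t / real N) * \<bar>ISB B t N j\<bar>)" for N
    unfolding Yn_def ISum_def ISB_def dW_def B_def by simp
  show ?thesis
    unfolding Y by (rule path_lower[OF t cB B0 F])
qed

lemma exp_liminf:
  fixes S :: real and T :: "nat \<Rightarrow> real"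
  assumes c: "c \<ge> 0" and ev: "\<And>e. e > 0 \<Longrightarrow> eventually (\<lambda>n. S - e < T n) sequentially"
  shows "ennreal (exp (c * S)) \<le> liminf (\<lambda>n. ennreal (exp (c * T n)))"
  unfolding le_Liminf_iff
proof (intro allI impI)
  fix y :: ennreal assume y: "y < ennreal (exp (c * S))"
  then obtain y' where y': "y = ennreal y'" "0 \<le> y'"
    by (cases y rule: ennreal_cases) auto
  have yl: "y' < exp (c * S)" using y y' by (simp add: ennreal_less_iff)
  obtain e where e: "e > 0" "y' < exp (c * (S - e))"
  proof (cases "y' = 0")
    case True then show ?thesis using that[of 1] by simp
  next
    case False
    then have yp: "y' > 0" using y' by simp
    define D where "D = c * S - ln y'"
    have "ln y' < ln (exp (c * S))" using yl yp by (subst ln_less_cancel_iff) auto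
    then have D: "D > 0" by (simp add: D_def)
    have "c * (D / (c + 1)) < D" using D c by (simp add: field_simps)
    then have "ln y' < c * (S - D / (c + 1))" by (simp add: D_def algebra_simps)
    then have "y' < exp (c * (S - D / (c + 1)))" using yp by (metis exp_less_mono exp_ln)
    then show ?thesis using that[of "D / (c + 1)"] D c by simp
  qed
  show "eventually (\<lambda>n. y < ennreal (exp (c * T n))) sequentially"
    using ev[OF e(1)]
  proof eventually_elim
    case (elim n)
    then have "c * (S - e) \<le> c * T n" using c by (intro mult_left_mono) auto
    then have "exp (c * (S - e)) \<le> exp (c * T n)" by simp
    then have "y' < exp (c * T n)" using e by linarith
    then show ?case using y' by (simp add: ennreal_less_iff)
  qed
qed

theorem mainTheorem13:
  fixes M :: "'a measure" and d :: nat and W :: "nat \<Rightarrow> real \<Rightarrow> 'a \<Rightarrow> real"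
    and t c :: real
  assumes "wiener_process M d W" and "t > 0" and "c \<ge> 0"
  shows "(\<integral>\<^sup>+\<omega>. ennreal (exp (c * (\<Sum>i<d.
              (LINT s:{0..t}|lborel. \<bar>wiener_integral (\<lambda>r. 1 / (t - r)) (W i) s \<omega>\<bar>)))) \<partial>M)
         \<le> ennreal ((exp (2 * c^2 * t) + 2 * c * sqrt (2 * pi * t) * exp (4 * c^2 * t)) powr (real d / 2))
     \<and> (\<integral>\<^sup>+\<omega>. ennreal (exp (c * (\<Sum>i<d.
              (LINT s:{0..t}|lborel. \<bar>wiener_integral (\<lambda>r. 1 / (t - r)) (W i) s \<omega>\<bar>)))) \<partial>M) < \<infinity>"
proof -
  note wp = assms(1) and t = assms(2) and c = assms(3)
  define Yv where "Yv i \<omega> = (LINT s:{0..t}|lborel. \<bar>wiener_integral (\<lambda>r. 1 / (t - r)) (W i) s \<omega>\<bar>)" for i \<omega>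
  define K where "K = (exp (2 * c^2 * t) + 2 * c * sqrt (2 * pi * t) * exp (4 * c^2 * t)) powr (real d / 2)"
  define Hd where "Hd = Hb (c * (pi / 2 * sqrt t)) ^ d"
  have HK: "Hd \<le> K" unfolding Hd_def K_def by (rule Hb_final[OF t c])
  have Yn0: "Yn W t N i \<omega> \<ge> 0" for N i \<omega> using t by (auto simp: Yn_def intro!: sum_nonneg)
  have pw: "ennreal (exp (c * (\<Sum>i<d. Yv i \<omega>))) \<le> liminf (\<lambda>n. ennreal (exp (c * (\<Sum>i<d. Yn W t (n + 2) i \<omega>))))"
    if \<omega>: "\<omega> \<in> space M" for \<omega>
  proof (rule exp_liminf[OF c])
    fix e :: real assume e: "e > 0"
    show "eventually (\<lambda>n. (\<Sum>i<d. Yv i \<omega>) - e < (\<Sum>i<d. Yn W t (n + 2) i \<omega>)) sequentially"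
    proof (cases "d = 0")
      case True then show ?thesis using e by simp
    next
      case False
      have "\<forall>i\<in>{..<d}. eventually (\<lambda>n. Yv i \<omega> - e / d < Yn W t (n + 2) i \<omega>) sequentially"
      proof
        fix i assume "i \<in> {..<d}"
        then have i: "i < d" by simp
        show "eventually (\<lambda>n. Yv i \<omega> - e / d < Yn W t (n + 2) i \<omega>) sequentially"
          by (rule ev_from_liminf[OF comp_pathwise[OF wp t i \<omega>, folded Yv_def] Yn0]) (use e False in simp)
      qed
      then have "eventually (\<lambda>n. \<forall>i\<in>{..<d}. Yv i \<omega> - e / d < Yn W t (n + 2) i \<omega>) sequentially"
        by (rule eventually_ball_finite[rotated]) simp
      then show ?thesis
      proof eventually_elim
        case (elim n)
        have "(\<Sum>i<d. Yv i \<omega> - e / d) < (\<Sum>i<d. Yn W t (n + 2) i \<omega>)"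
          using elim False by (intro sum_strict_mono) auto
        moreover have "(\<Sum>i<d. Yv i \<omega> - e / d) = (\<Sum>i<d. Yv i \<omega>) - e"
          using False by (simp add: sum_subtractf)
        ultimately show ?case by simp
      qed
    qed
  qed
  have meas: "(\<lambda>\<omega>. ennreal (exp (c * (\<Sum>i<d. Yn W t (n + 2) i \<omega>)))) \<in> borel_measurable M" for n
  proof -
    have "(\<lambda>\<omega>. \<Sum>i<d. Yn W t (n + 2) i \<omega>) \<in> borel_measurable M"
      by (intro borel_measurable_sum) (use Yn_meas[OF wp t] in auto)
    then show ?thesis by measurable
  qed
  have L: "(\<integral>\<^sup>+\<omega>. ennreal (exp (c * (\<Sum>i<d. Yv i \<omega>))) \<partial>M) \<le> ennreal K"
  proof -
    have "(\<integral>\<^sup>+\<omega>. ennreal (exp (c * (\<Sum>i<d. Yv i \<omega>))) \<partial>M)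
        \<le> (\<integral>\<^sup>+\<omega>. liminf (\<lambda>n. ennreal (exp (c * (\<Sum>i<d. Yn W t (n + 2) i \<omega>)))) \<partial>M)"
      by (rule nn_integral_mono) (rule pw)
    also have "\<dots> \<le> liminf (\<lambda>n. \<integral>\<^sup>+\<omega>. ennreal (exp (c * (\<Sum>i<d. Yn W t (n + 2) i \<omega>))) \<partial>M)"
      by (rule nn_integral_liminf) (rule meas)
    also have "\<dots> \<le> liminf (\<lambda>n. ennreal Hd)"
      by (intro Liminf_mono always_eventually allI) (unfold Hd_def, rule all_bound[OF wp t c], simp)
    also have "\<dots> = ennreal Hd" by (simp add: Liminf_const)
    also have "\<dots> \<le> ennreal K" using HK by (rule ennreal_leI)
    finally show ?thesis .
  qed
  have L2: "(\<integral>\<^sup>+\<omega>. ennreal (exp (c * (\<Sum>i<d. Yv i \<omega>))) \<partial>M) < \<infinity>"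
    using le_less_trans[OF L ennreal_less_top[of K]] by simp
  from L L2 show ?thesis unfolding Yv_def K_def by (rule conjI)
qed

end
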